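(* Let $\beta>1$ be an Ito-Sadahiro number, with $d_{-\beta}(l_\beta)=d_1\cdots d_m\,(d_{m+1}\cdots d_{m+p})^\omega$, where $m\ge0$, $p\ge1$ are minimal such that $d_{-\beta}(l_\beta)$ can be written in this form. Then $\beta$ is an algebraic integer of degree at most $m+p$.
   Context: For $\beta>1$ put $l_\beta=-\frac{\beta}{\beta+1}$, $r_\beta=\frac{1}{\beta+1}$ and $I_\beta=[l_\beta,r_\beta)$. Define $T:I_\beta\to I_\beta$ by $T(x)=-\beta x-\lfloor -\beta x-l_\beta\rfloor$. The $(-\beta)$-expansion of $x\in I_\beta$ is the infinite word $d_{-\beta}(x)=x_1x_2x_3\cdots$ with $x_i=\lfloor -\beta T^{i-1}(x)-l_\beta\rfloor$ for $i\ge1$; then $x=\sum_{i\ge1}x_i(-\beta)^{-i}$. The notation $w^\omega$ denotes infinite repetition of the finite word $w$. A number $\beta>1$ is an Ito-Sadahiro number if $d_{-\beta}(l_\beta)$ is eventually periodic. *)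

theory Defs
  imports "HOL-Computational_Algebra.Polynomial"
begin

definition lbeta :: "real \<Rightarrow> real" where
  "lbeta \<beta> = - \<beta> / (\<beta> + 1)"

definition rbeta :: "real \<Rightarrow> real" where
  "rbeta \<beta> = 1 / (\<beta> + 1)"

definition negT :: "real \<Rightarrow> real \<Rightarrow> real" where
  "negT \<beta> x = - \<beta> * x - of_int \<lfloor>- \<beta> * x - lbeta \<beta>\<rfloor>"

text \<open>The i-th digit (i \<ge> 1) of the (-beta)-expansion of x.\<close>
definition negdigit :: "real \<Rightarrow> real \<Rightarrow> nat \<Rightarrow> int" where
  "negdigit \<beta> x i = \<lfloor>- \<beta> * ((negT \<beta> ^^ (i - 1)) x) - lbeta \<beta>\<rfloor>"

text \<open>Word d (indexed from 1) has the form d_1..d_m (d_{m+1}..d_{m+p})^omega.\<close>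
definition eventually_periodic_with :: "(nat \<Rightarrow> int) \<Rightarrow> nat \<Rightarrow> nat \<Rightarrow> bool" where
  "eventually_periodic_with d m p \<longleftrightarrow> p \<ge> 1 \<and> (\<forall>i > m. d (i + p) = d i)"

definition Ito_Sadahiro :: "real \<Rightarrow> bool" where
  "Ito_Sadahiro \<beta> \<longleftrightarrow> \<beta> > 1 \<and>
     (\<exists>m p. eventually_periodic_with (negdigit \<beta> (lbeta \<beta>)) m p)"

definition alg_degree :: "real \<Rightarrow> nat" where
  "alg_degree x = (LEAST n. \<exists>q :: rat poly. q \<noteq> 0 \<and> degree q = n \<and> poly (map_poly of_rat q) x = 0)"

end

theory Submission
  imports Defs
begin

lemma mpi_add: "map_poly (of_int::int\<Rightarrow>'a::comm_ring_1) (p+q) = map_poly of_int p + map_poly of_int q"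
  by (rule poly_eqI) (simp add: coeff_map_poly)
lemma mpi_diff: "map_poly (of_int::int\<Rightarrow>'a::comm_ring_1) (p-q) = map_poly of_int p - map_poly of_int q"
  by (rule poly_eqI) (simp add: coeff_map_poly)
lemma mpi_uminus: "map_poly (of_int::int\<Rightarrow>'a::comm_ring_1) (-p) = - map_poly of_int p"
  by (rule poly_eqI) (simp add: coeff_map_poly)
lemma mpi_mult: "map_poly (of_int::int\<Rightarrow>'a::comm_ring_1) (p*q) = map_poly of_int p * map_poly of_int q"
  by (rule poly_eqI) (simp add: coeff_map_poly coeff_mult)
lemma mpi_smult: "map_poly (of_int::int\<Rightarrow>'a::comm_ring_1) (smult c q) = smult (of_int c) (map_poly of_int q)"
  by (rule poly_eqI) (simp add: coeff_map_poly)
lemma mpi_pCons: "map_poly (of_int::int\<Rightarrow>'a::comm_ring_1) (pCons c q) = pCons (of_int c) (map_poly of_int q)"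
  by (rule map_poly_pCons) simp

fun W :: "(nat \<Rightarrow> int) \<Rightarrow> nat \<Rightarrow> int poly" where
  "W d 0 = [:0,-1:]"
| "W d (Suc n) = pCons 0 (- W d n) - [:d (Suc n), d (Suc n):]"

lemma W_coeff: "coeff (W d n) (n+1) = (-1)^(n+1) \<and> (\<forall>k>n+1. coeff (W d n) k = 0)"
proof (induction n)
  case 0
  then show ?case by (auto simp: coeff_pCons split: nat.splits)
next
  case (Suc n)
  then show ?case by (auto simp: coeff_pCons split: nat.splits)
qed

lemma W_m1: "poly (W d n) (-1) = 1"
  by (induction n) auto

lemma y_step: "(negT \<beta> ^^ Suc n) x = - \<beta> * (negT \<beta> ^^ n) x - of_int (negdigit \<beta> x (Suc n))"
proof -
  have "(negT \<beta> ^^ Suc n) x = negT \<beta> ((negT \<beta> ^^ n) x)" by simp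
  also have "\<dots> = - \<beta> * (negT \<beta> ^^ n) x - of_int (negdigit \<beta> x (Suc n))"
    by (simp only: negT_def[of \<beta> "(negT \<beta> ^^ n) x"] negdigit_def diff_Suc_1)
  finally show ?thesis .
qed

lemma W_eval:
  fixes \<beta> :: real
  assumes "\<beta> + 1 \<noteq> 0"
  shows "poly (map_poly of_int (W (negdigit \<beta> (lbeta \<beta>)) n)) \<beta>
     = (\<beta>+1) * (negT \<beta> ^^ n) (lbeta \<beta>)"
proof (induction n)
  case 0
  show ?case
    using assms by (auto simp: mpi_pCons lbeta_def field_simps)
next
  case (Suc n)
  show ?case
    unfolding y_step using Suc by (simp add: mpi_diff mpi_pCons mpi_uminus algebra_simps)
qed

lemma T_range: "lbeta \<beta> \<le> negT \<beta> z \<and> negT \<beta> z < lbeta \<beta> + 1"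
proof -
  define t where "t = - \<beta> * z - lbeta \<beta>"
  have "negT \<beta> z = t + lbeta \<beta> - of_int \<lfloor>t\<rfloor>" unfolding negT_def t_def by simp
  moreover have "of_int \<lfloor>t\<rfloor> \<le> t" "t < of_int \<lfloor>t\<rfloor> + 1" by linarith+
  ultimately show ?thesis by linarith
qed

lemma y_bound: "\<bar>(negT \<beta> ^^ n) (lbeta \<beta>)\<bar> \<le> \<bar>lbeta \<beta>\<bar> + 1"
proof (cases n)
  case 0 then show ?thesis by simp
next
  case (Suc k)
  then show ?thesis using T_range[of \<beta> "(negT \<beta> ^^ k) (lbeta \<beta>)"] by auto
qed

theorem corollary1:
  fixes \<beta> :: real and m p :: nat
  assumes "\<beta> > 1"
    and "Ito_Sadahiro \<beta>"
    and "eventually_periodic_with (negdigit \<beta> (lbeta \<beta>)) m p"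
    and "\<forall>m' p'. eventually_periodic_with (negdigit \<beta> (lbeta \<beta>)) m' p' \<longrightarrow> m \<le> m' \<and> p \<le> p'"
  shows "algebraic_int \<beta> \<and> alg_degree \<beta> \<le> m + p"
proof -
  define d where "d = negdigit \<beta> (lbeta \<beta>)"
  define y where "y n = (negT \<beta> ^^ n) (lbeta \<beta>)" for n
  define B where "B = \<bar>lbeta \<beta>\<bar> + 1"
  have p1: "p \<ge> 1" and per: "\<And>i. i > m \<Longrightarrow> d (i + p) = d i"
    using assms(3) unfolding eventually_periodic_with_def d_def by auto
  have yb: "\<bar>y n\<bar> \<le> B" for n unfolding y_def B_def by (rule y_bound)
  have ys: "y (Suc n) = - \<beta> * y n - of_int (d (Suc n))" for n
    unfolding y_def d_def by (rule y_step)
  have z: "y (m+k+p) - y (m+k) = (-\<beta>)^k * (y (m+p) - y m)" for k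
  proof (induction k)
    case 0 then show ?case by simp
  next
    case (Suc k)
    have e1: "m + Suc k + p = Suc (m+k+p)" "m + Suc k = Suc (m+k)" by simp_all
    have "d (Suc (m+k+p)) = d (Suc (m+k))" using per[of "Suc (m+k)"] by simp
    moreover have "y (m + Suc k + p) = - \<beta> * y (m+k+p) - of_int (d (Suc (m+k+p)))"
      using ys[of "m+k+p"] by simp
    moreover have "y (m + Suc k) = - \<beta> * y (m+k) - of_int (d (Suc (m+k)))"
      unfolding e1 by (rule ys)
    ultimately have "y (m + Suc k + p) - y (m + Suc k) = - \<beta> * (y (m+k+p) - y (m+k))"
      by (simp add: algebra_simps)
    then show ?case using Suc by simp
  qed
  have yeq: "y (m+p) = y m"
  proof (rule ccontr)
    assume ne: "y (m+p) \<noteq> y m"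
    define c where "c = \<bar>y (m+p) - y m\<bar>"
    have c0: "c > 0" using ne unfolding c_def by simp
    obtain k where k: "2*B/c < \<beta>^k" using real_arch_pow[OF assms(1)] by blast
    have "\<bar>y (m+k+p) - y (m+k)\<bar> \<le> 2*B" using yb[of "m+k+p"] yb[of "m+k"] by linarith
    also have "\<bar>y (m+k+p) - y (m+k)\<bar> = \<beta>^k * c"
      unfolding z c_def using assms(1) by (simp add: abs_mult power_abs)
    finally have "\<beta>^k * c \<le> 2*B" .
    with k c0 show False by (simp add: field_simps)
  qed
  have b1: "\<beta> + 1 \<noteq> 0" using assms(1) by simp
  define P where "P = W d (m+p) - W d m"
  have Pev: "poly (map_poly of_int P) \<beta> = 0"
    unfolding P_def mpi_diff using W_eval[OF b1, of "m+p"] W_eval[OF b1, of m] yeq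
    unfolding d_def y_def by simp
  have cP: "coeff P (m+p+1) = (-1)^(m+p+1)" "\<forall>k>m+p+1. coeff P k = 0"
    using W_coeff[of d "m+p"] W_coeff[of d m] p1 unfolding P_def by auto
  have P0: "P \<noteq> 0" using cP(1) by (metis coeff_0 power_eq_0_iff zero_neq_neg_one)
  have dP: "degree P = m+p+1"
  proof (rule antisym)
    show "degree P \<le> m+p+1" using cP(2) by (intro degree_le) auto
    show "m+p+1 \<le> degree P" using cP(1) by (intro le_degree) simp
  qed
  have lP: "lead_coeff P = (-1)^(m+p+1)" using dP cP by simp
  have "poly P (-1) = 0" unfolding P_def by (simp add: W_m1)
  then have "[:1,1:] dvd P" using poly_eq_0_iff_dvd[of P "-1"] by simp
  then obtain Q where Q: "P = [:1,1:] * Q" by (elim dvdE)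
  have Q0: "Q \<noteq> 0" using P0 Q by auto
  have dQ: "degree Q = m+p" using dP Q Q0 degree_mult_eq[of "[:1,1:]" Q] by simp
  have lQ: "lead_coeff Q = (-1)^(m+p+1)" using lP Q lead_coeff_mult[of "[:1,1:]" Q] by simp
  have Qev: "poly (map_poly of_int Q) \<beta> = 0"
  proof -
    have "(1 + \<beta>) * poly (map_poly of_int Q) \<beta> = 0"
      using Pev unfolding Q mpi_mult by (simp add: mpi_pCons algebra_simps)
    then show ?thesis using b1 by (simp add: add.commute)
  qed
  define Q' where "Q' = smult (lead_coeff Q) Q"
  have lQ': "lead_coeff Q' = 1" unfolding Q'_def lead_coeff_smult lQ
    by (simp flip: power_add add: power_mult_distrib)
  have "poly (map_poly of_int Q') \<beta> = 0" unfolding Q'_def mpi_smult using Qev by simp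
  then have ai: "algebraic_int \<beta>" using lQ' algebraic_int_altdef_ipoly by blast
  define q where "q = (map_poly of_int Q :: rat poly)"
  have q0: "q \<noteq> 0" and dq: "degree q = m+p"
    unfolding q_def using Q0 dQ by (simp_all add: degree_map_poly map_poly_eq_0_iff)
  have "map_poly (of_rat :: rat \<Rightarrow> real) q = map_poly of_int Q"
    unfolding q_def by (simp add: map_poly_map_poly o_def)
  with Qev have "poly (map_poly of_rat q) \<beta> = 0" by simp
  then have "alg_degree \<beta> \<le> m + p"
    unfolding alg_degree_def using q0 dq by (intro Least_le) blast
  with ai show ?thesis by simp
qed

end
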